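(* Let $Q\subseteq\{0,1\}^n$ be any finite set of query points (the queries of a non-adaptive deterministic algorithm). Then the distribution of the answer vector $(\mathbf f(x))_{x\in Q}$ when $\mathbf f\sim\mathcal D_{\mathrm{yes}}$ conditioned on the event $\overline{\mathsf{Bad}}$ is identical to its distribution when $\mathbf f\sim\mathcal D_{\mathrm{no}}$ conditioned on $\overline{\mathsf{Bad}}$.
   Context: Parameters: $c_1>0$ constant, $a=\sqrt n/\epsilon$, $m=n-a$, $L=0.1\cdot 2^{\sqrt m/\epsilon}$. For $B\subseteq[n]$, $x_B$ is the restriction of $x$ to $B$; $|z|$ is Hamming weight. On $\{0,1\}^A$: $h^{(+,0)}\equiv0$; $h^{(+,1)}(z)=1$ iff $|z|>a/2+c_1\sqrt a$ or $|z|<a/2-c_1\sqrt a$; $h^{(-,0)}(z)=1$ iff $|z|>a/2+c_1\sqrt a$; $h^{(-,1)}(z)=1$ iff $|z|<a/2-c_1\sqrt a$. Both $\mathcal D_{\mathrm{yes}}$ and $\mathcal D_{\mathrm{no}}$ draw: a uniform $\mathbf A\subseteq[n]$ of size $a$, $\mathbf C=[n]\setminus\mathbf A$; $\mathbf T=(\mathbf T_1,\dots,\mathbf T_L)$, each $\mathbf T_\ell\subseteq\mathbf C$ formed independently by $\sqrt m/\epsilon$ uniform draws from $\mathbf C$ with replacement; uniform $\mathbf b\in\{0,1\}^L$. Let $S_{\mathbf T}(y)=\{\ell:y_j=1\ \forall j\in\mathbf T_\ell\}$. The function is: $1$ if $|S_{\mathbf T}(x_{\mathbf C})|>1$ or $|x_{\mathbf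 C}|>m/2+0.05\epsilon\sqrt m$; otherwise $0$ if $|S_{\mathbf T}(x_{\mathbf C})|=0$ or $|x_{\mathbf C}|<m/2$; otherwise, with $S_{\mathbf T}(x_{\mathbf C})=\{\ell\}$, it equals $h^{(+,\mathbf b_\ell)}(x_{\mathbf A})$ for $\mathcal D_{\mathrm{yes}}$ and $h^{(-,\mathbf b_\ell)}(x_{\mathbf A})$ for $\mathcal D_{\mathrm{no}}$. The event $\mathsf{Bad}$ (depending on $\mathbf A,\mathbf T$ and $Q$) holds iff there exist $x,y\in Q$ and $\ell\in[L]$ with $S_{\mathbf T}(x_{\mathbf C})=S_{\mathbf T}(y_{\mathbf C})=\{\ell\}$, $|x_{\mathbf C}|,|y_{\mathbf C}|\in[m/2,m/2+0.05\epsilon\sqrt m]$, $|x_{\mathbf A}|<a/2-c_1\sqrt a$ and $|y_{\mathbf A}|>a/2+c_1\sqrt a$. *)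

theory Defs
  imports "HOL-Probability.Probability"
begin

text \<open>Points of the hypercube are bit lists; coordinates are indexed 0..n-1.
  The weight of x restricted to B is the number of 1-coordinates of x in B.\<close>

definition wt :: "nat set \<Rightarrow> bool list \<Rightarrow> nat" where
  "wt B x = card {i \<in> B. i < length x \<and> x ! i}"

definition S_T :: "nat \<Rightarrow> (nat \<Rightarrow> nat set) \<Rightarrow> bool list \<Rightarrow> nat set" where
  "S_T L T x = {l \<in> {..<L}. \<forall>j \<in> T l. j < length x \<and> x ! j}"

text \<open>The functions h^{(+,beta)} (yes = True) and h^{(-,beta)} (yes = False),
  applied to x_A, where a = |A|.\<close>
definition h_fun :: "bool \<Rightarrow> bool \<Rightarrow> real \<Rightarrow> nat \<Rightarrow> nat set \<Rightarrow> bool list \<Rightarrow> bool" where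
  "h_fun yes beta c1 a A x =
     (let w = real (wt A x);
          hi = w > real a / 2 + c1 * sqrt (real a);
          lo = w < real a / 2 - c1 * sqrt (real a)
      in if yes then (if beta then hi \<or> lo else False)
         else (if beta then lo else hi))"

text \<open>The function determined by (A, T, b); yes = True gives D_yes, yes = False gives D_no.\<close>
definition hard_f :: "bool \<Rightarrow> nat \<Rightarrow> nat \<Rightarrow> real \<Rightarrow> real \<Rightarrow> nat \<Rightarrow>
    nat set \<Rightarrow> (nat \<Rightarrow> nat set) \<Rightarrow> (nat \<Rightarrow> bool) \<Rightarrow> bool list \<Rightarrow> bool" where
  "hard_f yes n a \<epsilon> c1 L A T b x =
     (let C = {..<n} - A; m = real (n - a); S = S_T L T x; wC = real (wt C x)
      in if card S > 1 \<or> wC > m / 2 + 0.05 * \<epsilon> * sqrt m then True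
         else if card S = 0 \<or> wC < m / 2 then False
         else h_fun yes (b (the_elem S)) c1 a A x)"

definition Bad :: "nat \<Rightarrow> nat \<Rightarrow> real \<Rightarrow> real \<Rightarrow> nat \<Rightarrow>
    nat set \<Rightarrow> (nat \<Rightarrow> nat set) \<Rightarrow> bool list set \<Rightarrow> bool" where
  "Bad n a \<epsilon> c1 L A T Q =
     (let C = {..<n} - A; m = real (n - a) in
      \<exists>x\<in>Q. \<exists>y\<in>Q. \<exists>l\<in>{..<L}.
         S_T L T x = {l} \<and> S_T L T y = {l} \<and>
         m / 2 \<le> real (wt C x) \<and> real (wt C x) \<le> m / 2 + 0.05 * \<epsilon> * sqrt m \<and>
         m / 2 \<le> real (wt C y) \<and> real (wt C y) \<le> m / 2 + 0.05 * \<epsilon> * sqrt m \<and>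
         real (wt A x) < real a / 2 - c1 * sqrt (real a) \<and>
         real (wt A y) > real a / 2 + c1 * sqrt (real a))"

definition draws :: "nat set \<Rightarrow> nat \<Rightarrow> nat set pmf" where
  "draws C t = map_pmf (\<lambda>g. g ` {..<t}) (Pi_pmf {..<t} 0 (\<lambda>_. pmf_of_set C))"

text \<open>Joint distribution of (A, T, b), common to D_yes and D_no.\<close>
definition ATb_pmf :: "nat \<Rightarrow> nat \<Rightarrow> nat \<Rightarrow> nat \<Rightarrow>
    (nat set \<times> (nat \<Rightarrow> nat set) \<times> (nat \<Rightarrow> bool)) pmf" where
  "ATb_pmf n a t L = do {
     A \<leftarrow> pmf_of_set {A. A \<subseteq> {..<n} \<and> card A = a};
     T \<leftarrow> Pi_pmf {..<L} {} (\<lambda>_. draws ({..<n} - A) t);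
     b \<leftarrow> Pi_pmf {..<L} False (\<lambda>_. bernoulli_pmf (1 / 2));
     return_pmf (A, T, b) }"

definition notBad_event :: "nat \<Rightarrow> nat \<Rightarrow> real \<Rightarrow> real \<Rightarrow> nat \<Rightarrow> bool list set \<Rightarrow>
    (nat set \<times> (nat \<Rightarrow> nat set) \<times> (nat \<Rightarrow> bool)) set" where
  "notBad_event n a \<epsilon> c1 L Q = {(A, T, b). \<not> Bad n a \<epsilon> c1 L A T Q}"

definition answer_dist :: "bool \<Rightarrow> nat \<Rightarrow> nat \<Rightarrow> real \<Rightarrow> real \<Rightarrow> nat \<Rightarrow> nat \<Rightarrow>
    bool list set \<Rightarrow> (bool list \<Rightarrow> bool) pmf" where
  "answer_dist yes n a \<epsilon> c1 t L Q =
     map_pmf (\<lambda>(A, T, b). \<lambda>x. if x \<in> Q then hard_f yes n a \<epsilon> c1 L A T b x else False)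
       (cond_pmf (ATb_pmf n a t L) (notBad_event n a \<epsilon> c1 L Q))"

end

theory Submission
  imports Defs
begin

definition flipset :: "nat \<Rightarrow> nat \<Rightarrow> real \<Rightarrow> real \<Rightarrow> nat \<Rightarrow> bool list set \<Rightarrow>
    nat set \<Rightarrow> (nat \<Rightarrow> nat set) \<Rightarrow> nat set" where
  "flipset n a \<epsilon> c1 L Q A T = {l \<in> {..<L}. \<exists>x\<in>Q. S_T L T x = {l} \<and>
     real (n - a) / 2 \<le> real (wt ({..<n} - A) x) \<and>
     real (wt ({..<n} - A) x) \<le> real (n - a) / 2 + 0.05 * \<epsilon> * sqrt (real (n - a)) \<and>
     real (wt A x) > real a / 2 + c1 * sqrt (real a)}"

definition flipb :: "nat set \<Rightarrow> (nat \<Rightarrow> bool) \<Rightarrow> nat \<Rightarrow> bool" where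
  "flipb H b = (\<lambda>i. b i \<noteq> (i \<in> H))"

lemma flipb_invol: "flipb H (flipb H b) = b"
  by (auto simp: flipb_def)

lemma flip_Pi_inv:
  assumes "H \<subseteq> {..<L}"
  shows "map_pmf (flipb H) (Pi_pmf {..<L} False (\<lambda>_. bernoulli_pmf (1/2)))
       = Pi_pmf {..<L} False (\<lambda>_. bernoulli_pmf (1/2))"
proof (rule pmf_eqI)
  fix g
  have inj: "inj (flipb H)" by (metis flipb_invol injI)
  have "pmf (map_pmf (flipb H) (Pi_pmf {..<L} False (\<lambda>_. bernoulli_pmf (1/2)))) g
      = pmf (map_pmf (flipb H) (Pi_pmf {..<L} False (\<lambda>_. bernoulli_pmf (1/2)))) (flipb H (flipb H g))"
    by (simp add: flipb_invol)
  also have "\<dots> = pmf (Pi_pmf {..<L} False (\<lambda>_. bernoulli_pmf (1/2))) (flipb H g)"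
    by (rule pmf_map_inj'[OF inj])
  also have "\<dots> = pmf (Pi_pmf {..<L} False (\<lambda>_. bernoulli_pmf (1/2))) g"
    using assms by (subst (1 2) pmf_Pi) (auto simp: flipb_def)
  finally show "pmf (map_pmf (flipb H) (Pi_pmf {..<L} False (\<lambda>_. bernoulli_pmf (1/2)))) g
      = pmf (Pi_pmf {..<L} False (\<lambda>_. bernoulli_pmf (1/2))) g" .
qed

lemma pointwise:
  assumes "c1 > 0" and "\<not> Bad n a \<epsilon> c1 L A T Q" and "x \<in> Q"
  shows "hard_f True n a \<epsilon> c1 L A T b x
       = hard_f False n a \<epsilon> c1 L A T (flipb (flipset n a \<epsilon> c1 L Q A T) b) x"
proof -
  define C where "C = {..<n} - A"
  define m where "m = real (n - a)"
  define S where "S = S_T L T x"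
  define hi where "hi = real a / 2 + c1 * sqrt (real a)"
  define lo where "lo = real a / 2 - c1 * sqrt (real a)"
  have hilo: "lo \<le> hi" using assms(1) by (simp add: hi_def lo_def)
  show ?thesis
  proof (cases "card S > 1 \<or> real (wt C x) > m / 2 + 0.05 * \<epsilon> * sqrt m
       \<or> card S = 0 \<or> real (wt C x) < m / 2")
    case True
    then show ?thesis unfolding hard_f_def Let_def C_def[symmetric] m_def[symmetric]
        S_def[symmetric] by auto
  next
    case False
    then have "card S = 1" by auto
    then obtain l where Sl: "S = {l}" by (auto simp: card_Suc_eq)
    have lL: "l < L" using Sl by (auto simp: S_def S_T_def)
    have mid: "m / 2 \<le> real (wt C x)" "real (wt C x) \<le> m / 2 + 0.05 * \<epsilon> * sqrt m"
      using False by auto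
    have red: "hard_f yes n a \<epsilon> c1 L A T bb x = h_fun yes (bb l) c1 a A x" for yes bb
      unfolding hard_f_def Let_def C_def[symmetric] m_def[symmetric] S_def[symmetric]
      using False Sl by auto
    have hf: "h_fun yes beta c1 a A x = (let w = real (wt A x) in
        if yes then (if beta then w > hi \<or> w < lo else False)
        else (if beta then w < lo else w > hi))" for yes beta
      by (simp add: h_fun_def hi_def lo_def Let_def)
    show ?thesis
    proof (cases "real (wt A x) > hi")
      case True
      then have "l \<in> flipset n a \<epsilon> c1 L Q A T"
        using assms(3) Sl lL mid unfolding flipset_def S_def C_def m_def hi_def by auto
      then show ?thesis using True hilo by (auto simp: red hf flipb_def Let_def)
    next
      case nhi: False
      show ?thesis
      proof (cases "real (wt A x) < lo")
        case True
        have "l \<notin> flipset n a \<epsilon> c1 L Q A T"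
        proof
          assume "l \<in> flipset n a \<epsilon> c1 L Q A T"
          then obtain y where "y \<in> Q" "S_T L T y = {l}"
            "real (n - a) / 2 \<le> real (wt ({..<n} - A) y)"
            "real (wt ({..<n} - A) y) \<le> real (n - a) / 2 + 0.05 * \<epsilon> * sqrt (real (n - a))"
            "real (wt A y) > real a / 2 + c1 * sqrt (real a)"
            unfolding flipset_def by auto
          then have "Bad n a \<epsilon> c1 L A T Q"
            unfolding Bad_def Let_def using assms(3) Sl lL mid True
            apply (simp only: C_def[symmetric] m_def[symmetric])
            apply (rule bexI[of _ x], rule bexI[of _ y], rule bexI[of _ l])
            by (auto simp: S_def lo_def)
          then show False using assms(2) by simp
        qed
        then show ?thesis using True hilo by (auto simp: red hf flipb_def Let_def)
      next
        case False
        then show ?thesis using nhi by (auto simp: red hf flipb_def Let_def)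
      qed
    qed
  qed
qed


theorem mainTheorem9:
  fixes n a t L :: nat and \<epsilon> c1 :: real and Q :: "bool list set"
  assumes "\<epsilon> > 0" and "c1 > 0"
    and "real a = sqrt (real n) / \<epsilon>" and "a < n"
    and "real t = sqrt (real (n - a)) / \<epsilon>"
    and "L = nat \<lfloor>0.1 * (2::real) ^ t\<rfloor>"
    and "finite Q" and "\<forall>x\<in>Q. length x = n"
    and "measure_pmf.prob (ATb_pmf n a t L) (notBad_event n a \<epsilon> c1 L Q) > 0"
  shows "answer_dist True n a \<epsilon> c1 t L Q = answer_dist False n a \<epsilon> c1 t L Q"
proof -
  define D where "D = ATb_pmf n a t L"
  define E where "E = notBad_event n a \<epsilon> c1 L Q"
  define \<psi> where "\<psi> = (\<lambda>(A, T, b). (A, T, flipb (flipset n a \<epsilon> c1 L Q A T) b))"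
  define F where "F yes = (\<lambda>(A, T, b). \<lambda>x. if x \<in> Q then hard_f yes n a \<epsilon> c1 L A T b x else False)"
    for yes
  have fsub: "flipset n a \<epsilon> c1 L Q A T \<subseteq> {..<L}" for A T
    by (auto simp: flipset_def)
  have key: "Pi_pmf {..<L} False (\<lambda>_. bernoulli_pmf (1 / 2)) \<bind>
        (\<lambda>b. return_pmf (A, T, flipb (flipset n a \<epsilon> c1 L Q A T) b))
      = Pi_pmf {..<L} False (\<lambda>_. bernoulli_pmf (1 / 2)) \<bind> (\<lambda>b. return_pmf (A, T, b))" for A T
  proof -
    have "Pi_pmf {..<L} False (\<lambda>_. bernoulli_pmf (1 / 2)) \<bind>
        (\<lambda>b. return_pmf (A, T, flipb (flipset n a \<epsilon> c1 L Q A T) b))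
      = map_pmf (flipb (flipset n a \<epsilon> c1 L Q A T)) (Pi_pmf {..<L} False (\<lambda>_. bernoulli_pmf (1 / 2)))
           \<bind> (\<lambda>b. return_pmf (A, T, b))"
      by (simp add: bind_map_pmf)
    also have "\<dots> = Pi_pmf {..<L} False (\<lambda>_. bernoulli_pmf (1 / 2)) \<bind> (\<lambda>b. return_pmf (A, T, b))"
      by (simp only: flip_Pi_inv[OF fsub])
    finally show ?thesis .
  qed
  have Dpsi: "map_pmf \<psi> D = D"
    unfolding D_def ATb_pmf_def map_bind_pmf map_return_pmf
    by (simp add: \<psi>_def key)
  have pre: "\<psi> -` E = E" by (auto simp: \<psi>_def E_def notBad_event_def)
  have ne: "set_pmf D \<inter> E \<noteq> {}"
  proof
    assume "set_pmf D \<inter> E = {}"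
    then have "measure_pmf.prob D E = 0" by (simp add: measure_pmf_zero_iff)
    then show False using assms(9) by (simp add: D_def E_def)
  qed
  have "answer_dist False n a \<epsilon> c1 t L Q = map_pmf (F False) (cond_pmf (map_pmf \<psi> D) E)"
    unfolding answer_dist_def F_def E_def Dpsi unfolding D_def ..
  also have "\<dots> = map_pmf (F False) (map_pmf \<psi> (cond_pmf D E))"
    using ne by (simp add: cond_map_pmf pre)
  also have "\<dots> = map_pmf (F False \<circ> \<psi>) (cond_pmf D E)"
    by (simp add: pmf.map_comp)
  also have "\<dots> = map_pmf (F True) (cond_pmf D E)"
  proof (rule map_pmf_cong[OF refl])
    fix w assume "w \<in> set_pmf (cond_pmf D E)"
    then have "w \<in> E" using ne by (simp add: set_cond_pmf)
    then obtain A T b where w: "w = (A, T, b)" and nb: "\<not> Bad n a \<epsilon> c1 L A T Q"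
      by (auto simp: E_def notBad_event_def)
    show "(F False \<circ> \<psi>) w = F True w"
      using pointwise[OF assms(2) nb] by (auto simp: w F_def \<psi>_def)
  qed
  also have "\<dots> = answer_dist True n a \<epsilon> c1 t L Q"
    unfolding answer_dist_def F_def D_def E_def ..
  finally show ?thesis by (rule sym)
qed

end
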